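(* For any $d$-dimensional Fano simplex $\Delta$ of Gorenstein index $g$, the number $g^{d-1}\lambda(\Delta^* )$ is an integer.
   Context: A Fano simplex is a full-dimensional simplex in $\mathbb{Q}^d$ with primitive vertices in $\mathbb{Z}^d$ and the origin in its interior. Its dual is $\Delta^*=\{u:\langle u,v\rangle\ge-1\ \forall v\in\Delta\}$. The Gorenstein index of a Fano simplex is the least $g\ge1$ such that $g\Delta^*$ has integral vertices. For an IP simplex (origin in the interior) with vertices $v_0,\dots,v_d$, the weight system is $Q=(q_0,\dots,q_d)$, $q_i=|\det(v_j:j\neq i)|$, and the factor $\lambda$ is the unique positive rational with $Q=\lambda Q'$, $Q'$ positive integers with $\gcd 1$. *)

theory Defs
  imports "HOL-Analysis.Analysis"
begin

text \<open>Points of Q^d are modelled in real^'n with d = CARD('n).\<close>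

definition integral_pt :: "real^'n \<Rightarrow> bool" where
  "integral_pt v \<longleftrightarrow> (\<forall>i. v $ i \<in> \<int>)"

definition primitive_pt :: "real^'n \<Rightarrow> bool" where
  "primitive_pt v \<longleftrightarrow> integral_pt v \<and> v \<noteq> 0 \<and>
     (\<forall>k::int. k > 0 \<longrightarrow> integral_pt ((1 / real_of_int k) *\<^sub>R v) \<longrightarrow> k = 1)"

definition full_simplex_vertices :: "(real^'n) set \<Rightarrow> bool" where
  "full_simplex_vertices V \<longleftrightarrow> finite V \<and> card V = CARD('n) + 1 \<and> \<not> affine_dependent V"

definition fano_simplex :: "(real^'n) set \<Rightarrow> bool" where
  "fano_simplex V \<longleftrightarrow> full_simplex_vertices V \<and> (\<forall>v\<in>V. primitive_pt v)
      \<and> 0 \<in> interior (convex hull V)"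

definition dual_poly :: "(real^'n) set \<Rightarrow> (real^'n) set" where
  "dual_poly P = {u. \<forall>v\<in>P. inner u v \<ge> -1}"

definition vertices :: "(real^'n) set \<Rightarrow> (real^'n) set" where
  "vertices P = {x. x extreme_point_of P}"

definition gorenstein_index :: "(real^'n) set \<Rightarrow> nat" where
  "gorenstein_index P = (LEAST g::nat. g \<ge> 1 \<and>
      (\<forall>x \<in> vertices ((\<lambda>u. real g *\<^sub>R u) ` dual_poly P). integral_pt x))"

text \<open>Weight q_w of vertex w of a simplex with vertex set W: absolute value of the
  determinant of the matrix whose columns are the other vertices (independent of their order).\<close>
definition weight :: "(real^'n) set \<Rightarrow> real^'n \<Rightarrow> real" where
  "weight W w = (let f = (SOME f :: 'n \<Rightarrow> real^'n. bij_betw f UNIV (W - {w}))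
                 in \<bar>det (\<chi> i j. f j $ i)\<bar>)"

definition weight_factor :: "(real^'n) set \<Rightarrow> real" where
  "weight_factor W = (THE l. l > 0 \<and> l \<in> \<rat> \<and>
      (\<exists>Q' :: real^'n \<Rightarrow> int. (\<forall>w\<in>W. Q' w > 0 \<and> weight W w = l * real_of_int (Q' w))
            \<and> Gcd (Q' ` W) = 1))"

end

theory Submission
  imports Defs
begin


lemma det_Ints:
  fixes A :: "real^'n^'n"
  assumes "\<And>i j. A$i$j \<in> \<int>"
  shows "det A \<in> \<int>"
  unfolding det_def
  by (intro Ints_sum Ints_mult Ints_prod) (auto simp: assms)

lemma cramer_Ints:
  fixes A :: "real^'n^'n"
  assumes "\<And>i j. A$i$j \<in> \<int>" "\<And>i. b$i \<in> \<int>" "A *v x = b"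
  shows "x$k * det A \<in> \<int>"
proof -
  have "x$k * det A = det((\<chi> i j. if j = k then (A *v x)$i else A$i$j) :: real^'n^'n)"
    by (rule cramer_lemma[symmetric])
  also have "\<dots> \<in> \<int>" by (rule det_Ints) (use assms in auto)
  finally show ?thesis .
qed

lemma det_scale:
  fixes A :: "real^'n^'n"
  shows "det (\<chi> i j. c * A$i$j) = c ^ CARD('n) * det A"
  unfolding det_def
  by (simp add: sum_distrib_left prod.distrib mult_ac)

lemma primitive_mult_Ints:
  fixes v :: "real^'n"
  assumes "primitive_pt v" "\<And>k. z * v$k \<in> \<int>"
  shows "z \<in> \<int>"
proof -
  from assms(1) have vi: "integral_pt v" and v0: "v \<noteq> 0"
    and pr: "\<And>k::int. k > 0 \<Longrightarrow> integral_pt ((1 / real_of_int k) *\<^sub>R v) \<Longrightarrow> k = 1"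
    by (auto simp: primitive_pt_def)
  obtain i where vi0: "v$i \<noteq> 0" using v0 by (metis vec_eq_iff zero_index)
  obtain m where m: "v$i = of_int m" using vi by (auto simp: integral_pt_def elim!: Ints_cases)
  obtain p where p: "z * v$i = of_int p" using assms(2)[of i] by (auto elim!: Ints_cases)
  have "z = of_int p / of_int m" using p m vi0 by (simp add: field_simps)
  then have "z \<in> \<rat>" by simp
  then obtain a b where b: "b > 0" "coprime a b" and z: "z = of_int a / of_int b"
    by (rule Rats_cases')
  have "b dvd v'" if "of_int v' = v$k" for k v'
  proof -
    obtain r where r: "z * v$k = of_int r" using assms(2)[of k] by (auto elim!: Ints_cases)
    have "of_int a * of_int v' = (of_int b * of_int r :: real)"
      using r z that b by (simp add: field_simps)
    then have "a * v' = b * r" by (simp flip: of_int_mult)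
    then have "b dvd a * v'" by simp
    then show ?thesis using b(2) by (simp add: coprime_commute coprime_dvd_mult_right_iff)
  qed
  then have "integral_pt ((1 / real_of_int b) *\<^sub>R v)"
    unfolding integral_pt_def
  proof (intro allI)
    fix k
    obtain v' where v': "v$k = of_int v'" using vi by (auto simp: integral_pt_def elim!: Ints_cases)
    obtain c where "v' = b * c" using \<open>\<And>k v'. of_int v' = v$k \<Longrightarrow> b dvd v'\<close>[of v' k] v' by (auto elim!: dvdE)
    then show "((1 / real_of_int b) *\<^sub>R v) $ k \<in> \<int>" using v' b by simp
  qed
  then have "b = 1" using pr b by blast
  then show ?thesis using z by simp
qed

lemma vertices_scale:
  fixes P :: "(real^'n) set"
  assumes "c > 0"
  shows "vertices ((\<lambda>u. c *\<^sub>R u) ` P) = (\<lambda>u. c *\<^sub>R u) ` vertices P"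
proof -
  have lin: "linear ((*\<^sub>R) c :: real^'n \<Rightarrow> _)" by simp
  have inj: "inj ((*\<^sub>R) c :: real^'n \<Rightarrow> _)" using assms by (auto intro: injI)
  have *: "(c *\<^sub>R x) extreme_point_of ((\<lambda>u. c *\<^sub>R u) ` P) \<longleftrightarrow> x extreme_point_of P" for x
    using face_of_linear_image[OF lin inj, of "{x}" P]
    by (simp add: face_of_singleton)
  show ?thesis
  proof (rule set_eqI)
    fix y :: "real^'n"
    have yeq: "y = c *\<^sub>R ((1/c) *\<^sub>R y)" using assms by simp
    show "y \<in> vertices ((\<lambda>u. c *\<^sub>R u) ` P) \<longleftrightarrow> y \<in> (\<lambda>u. c *\<^sub>R u) ` vertices P"
      unfolding vertices_def mem_Collect_eq
    proof
      assume "y extreme_point_of (\<lambda>u. c *\<^sub>R u) ` P"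
      then have "(c *\<^sub>R ((1/c) *\<^sub>R y)) extreme_point_of (\<lambda>u. c *\<^sub>R u) ` P"
        using yeq by simp
      then have "((1/c) *\<^sub>R y) extreme_point_of P" using * by blast
      then show "y \<in> (\<lambda>u. c *\<^sub>R u) ` {x. x extreme_point_of P}"
        using yeq by blast
    next
      assume "y \<in> (\<lambda>u. c *\<^sub>R u) ` {x. x extreme_point_of P}"
      then obtain x where "x extreme_point_of P" "y = c *\<^sub>R x" by blast
      then show "y extreme_point_of (\<lambda>u. c *\<^sub>R u) ` P" using * by blast
    qed
  qed
qed



lemma wf_unique:
  fixes W :: "'a set" and q :: "'a \<Rightarrow> real"
  assumes fin: "finite W" and ne: "W \<noteq> {}"
    and h1: "\<forall>w\<in>W. Q1 w > 0 \<and> q w = l1 * real_of_int (Q1 w)" "Gcd (Q1 ` W) = 1" "l1 > 0"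
    and h2: "\<forall>w\<in>W. Q2 w > 0 \<and> q w = l2 * real_of_int (Q2 w)" "Gcd (Q2 ` W) = 1" "l2 > 0"
  shows "l1 = l2"
proof -
  obtain w0 where w0: "w0 \<in> W" using ne by blast
  have eq: "Q2 w0 * Q1 w = Q1 w0 * Q2 w" if "w \<in> W" for w
  proof -
    have "l1 * l2 * (of_int (Q2 w0 * Q1 w)) = (l1 * of_int (Q1 w)) * (l2 * of_int (Q2 w0))"
      by (simp add: algebra_simps)
    also have "\<dots> = (l2 * of_int (Q2 w)) * (l1 * of_int (Q1 w0))"
      using h1(1) h2(1) that w0 by metis
    also have "\<dots> = l1 * l2 * (of_int (Q1 w0 * Q2 w))"
      by (simp add: algebra_simps)
    finally have "real_of_int (Q2 w0 * Q1 w) = of_int (Q1 w0 * Q2 w)"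
      using h1(3) h2(3) by simp
    then show ?thesis by (simp only: of_int_eq_iff)
  qed
  have "(*) (Q2 w0) ` Q1 ` W = (*) (Q1 w0) ` Q2 ` W"
    using eq by (force simp: image_image intro: image_cong)
  then have "normalize (Q2 w0 * Gcd (Q1 ` W)) = normalize (Q1 w0 * Gcd (Q2 ` W))"
    by (simp only: Gcd_mult[symmetric])
  then have "\<bar>Q2 w0\<bar> = \<bar>Q1 w0\<bar>" using h1 h2 w0 by simp
  then have "Q2 w0 = Q1 w0" using h1(1) h2(1) w0 by (metis abs_of_pos)
  then show ?thesis using h1(1) h2(1) w0 by (metis mult_right_cancel of_int_0_eq_iff less_irrefl)
qed

lemma wf_Ints:
  fixes W :: "'a set" and q :: "'a \<Rightarrow> real" and G :: real
  assumes fin: "finite W" and ne: "W \<noteq> {}"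
    and qpos: "\<And>w. w\<in>W \<Longrightarrow> q w > 0" and qint: "\<And>w. w\<in>W \<Longrightarrow> G * q w \<in> \<int>"
    and G: "G \<in> \<int>" "G > 0"
  shows "G * (THE l. l > 0 \<and> l \<in> \<rat> \<and>
      (\<exists>Q' :: 'a \<Rightarrow> int. (\<forall>w\<in>W. Q' w > 0 \<and> q w = l * real_of_int (Q' w))
            \<and> Gcd (Q' ` W) = 1)) \<in> \<int>"
proof -
  define n where "n w = \<lfloor>G * q w\<rfloor>" for w
  have n: "of_int (n w) = G * q w" if "w \<in> W" for w
    using qint[OF that] unfolding n_def by (metis Ints_cases floor_of_int)
  have npos: "n w > 0" if "w \<in> W" for w
    using n[OF that] qpos[OF that] G by (metis mult_pos_pos of_int_0_less_iff)
  define Gn where "Gn = Gcd (n ` W)"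
  have Gn0: "Gn \<noteq> 0" unfolding Gn_def using ne npos by (force simp: Gcd_0_iff)
  have Gnpos: "Gn > 0"
  proof -
    have "Gn \<ge> 0" unfolding Gn_def by simp
    then show ?thesis using Gn0 by simp
  qed
  have dv: "Gn dvd n w" if "w \<in> W" for w unfolding Gn_def using that by simp
  define Q' where "Q' w = n w div Gn" for w
  have Q'eq: "Gn * Q' w = n w" if "w \<in> W" for w
    unfolding Q'_def using dv[OF that] by simp
  define l where "l = of_int Gn / G"
  have Q'pos: "Q' w > 0" if "w \<in> W" for w
    using Q'eq[OF that] npos[OF that] Gnpos by (metis zero_less_mult_pos)
  have qeq: "q w = l * of_int (Q' w)" if "w \<in> W" for w
  proof -
    have "G * q w = of_int (Gn * Q' w)" using n[OF that] Q'eq[OF that] by simp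
    then show ?thesis unfolding l_def using G by (simp add: field_simps)
  qed
  have "(*) Gn ` Q' ` W = n ` W" using Q'eq by (force simp: image_image)
  then have "normalize (Gn * Gcd (Q' ` W)) = Gn"
    by (simp only: Gcd_mult[symmetric] Gn_def[symmetric] normalize_Gcd)
  then have "Gn * Gcd (Q' ` W) = Gn * 1" using Gnpos by (simp add: abs_mult)
  then have gcd1: "Gcd (Q' ` W) = 1" using Gn0 by (metis mult_left_cancel)
  have lpos: "l > 0" unfolding l_def using Gnpos G by simp
  have lrat: "l \<in> \<rat>" unfolding l_def using G(1) by (metis Ints_cases Rats_divide Rats_of_int)
  let ?P = "\<lambda>l. l > 0 \<and> l \<in> \<rat> \<and>
      (\<exists>Q' :: 'a \<Rightarrow> int. (\<forall>w\<in>W. Q' w > 0 \<and> q w = l * real_of_int (Q' w))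
            \<and> Gcd (Q' ` W) = 1)"
  have Pl: "?P l" using lpos lrat Q'pos qeq gcd1 by blast
  have "(THE l. ?P l) = l"
  proof (rule the_equality)
    show "?P l" by (rule Pl)
  next
    fix l2 assume "?P l2"
    then obtain Q2 where "\<forall>w\<in>W. Q2 w > 0 \<and> q w = l2 * real_of_int (Q2 w)" "Gcd (Q2 ` W) = 1" "l2 > 0"
      by blast
    then show "l2 = l" using wf_unique[OF fin ne _ _ _ _ gcd1 lpos] Q'pos qeq by blast
  qed
  then show ?thesis unfolding l_def using G by simp
qed



locale fs =
  fixes V :: "(real^'n) set"
  assumes fano: "fano_simplex V"
begin

lemma finV: "finite V" and cardV: "card V = CARD('n) + 1" and indepV: "\<not> affine_dependent V"
  and primV: "v \<in> V \<Longrightarrow> primitive_pt v" and int0: "0 \<in> interior (convex hull V)"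
  using fano by (auto simp: fano_simplex_def full_simplex_vertices_def)

lemma intV: "v \<in> V \<Longrightarrow> v $ i \<in> \<int>"
  using primV by (auto simp: primitive_pt_def integral_pt_def)

lemma lam_ex: "\<exists>l. (\<forall>x\<in>V. 0 < l x) \<and> sum l V = 1 \<and> (\<Sum>x\<in>V. l x *\<^sub>R x) = 0"
proof -
  have "\<not> card V \<le> DIM(real^'n)" using cardV by simp
  then show ?thesis using int0 interior_convex_hull_explicit_minimal[OF indepV] by auto
qed

definition "lam = (SOME l. (\<forall>x\<in>V. 0 < l x) \<and> sum l V = 1 \<and> (\<Sum>x\<in>V. l x *\<^sub>R x) = 0)"

lemma lam: "\<And>x. x \<in> V \<Longrightarrow> 0 < lam x" "sum lam V = 1" "(\<Sum>x\<in>V. lam x *\<^sub>R x) = 0"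
  using someI_ex[OF lam_ex] unfolding lam_def[symmetric] by auto

lemma indep_minus:
  assumes x: "x \<in> V" shows "independent (V - {x})"
proof
  assume "dependent (V - {x})"
  then obtain c where c: "\<exists>v\<in>V-{x}. c v \<noteq> 0" "(\<Sum>v\<in>V-{x}. c v *\<^sub>R v) = 0"
    using dependent_finite[of "V - {x}"] finV by auto
  define c' where "c' w = (if w = x then 0 else c w)" for w
  define t where "t = sum c (V - {x})"
  define U where "U w = c' w - t * lam w" for w
  have s1: "sum c' V = t" unfolding t_def
    using sum.remove[OF finV x, of c'] by (simp add: c'_def)
  have s2: "(\<Sum>w\<in>V. c' w *\<^sub>R w) = 0"
    using sum.remove[OF finV x, of "\<lambda>w. c' w *\<^sub>R w"] c(2) by (simp add: c'_def)
  have "sum U V = 0" unfolding U_def using s1 lam(2)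
    by (simp add: sum_subtractf sum_distrib_left[symmetric])
  moreover have "(\<Sum>w\<in>V. U w *\<^sub>R w) = 0"
  proof -
    have "(\<Sum>w\<in>V. U w *\<^sub>R w) = (\<Sum>w\<in>V. c' w *\<^sub>R w) - t *\<^sub>R (\<Sum>w\<in>V. lam w *\<^sub>R w)"
      unfolding U_def by (simp add: scaleR_diff_left sum_subtractf scaleR_sum_right)
    then show ?thesis using s2 lam(3) by simp
  qed
  moreover have "\<exists>v\<in>V. U v \<noteq> 0"
  proof (cases "t = 0")
    case True
    then show ?thesis using c(1) by (auto simp: U_def c'_def)
  next
    case False
    then show ?thesis using x lam(1)[OF x] by (auto simp: U_def c'_def)
  qed
  ultimately have "affine_dependent V" using affine_dependent_explicit_finite[OF finV] by blast
  then show False using indepV by blast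
qed

lemma span_minus:
  assumes x: "x \<in> V" shows "span (V - {x}) = UNIV"
proof -
  have "card (V - {x}) = CARD('n)" using x finV cardV by simp
  then have "UNIV \<subseteq> span (V - {x})"
    by (intro card_ge_dim_independent indep_minus x) auto
  then show ?thesis by blast
qed

lemma orth0:
  assumes x: "x \<in> V" and h: "\<And>w. w \<in> V - {x} \<Longrightarrow> inner u w = 0"
  shows "u = 0"
proof -
  have "orthogonal u u"
    by (rule orthogonal_to_span[of u "V - {x}"]) (use span_minus[OF x] h in \<open>auto simp: orthogonal_def\<close>)
  then show ?thesis by (simp add: orthogonal_def)
qed

lemma bij_ex:
  assumes x: "x \<in> V" shows "\<exists>e::'n \<Rightarrow> real^'n. bij_betw e UNIV (V - {x})"
  using finite_same_card_bij[of "UNIV::'n set" "V - {x}"] x finV cardV by simp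

lemma row_system:
  assumes x: "x \<in> V" and e: "bij_betw e UNIV (V - {x})"
  shows "(\<chi> i j. e i $ j) *v y = (\<chi> i. inner (e i) y)"
    and "invertible (\<chi> i j. e i $ j :: real^'n^'n)"
proof -
  show eq: "(\<chi> i j. e i $ j) *v y = (\<chi> i. inner (e i) y)" for y
    by (simp add: matrix_vector_mult_def inner_vec_def vec_eq_iff)
  have "z = 0" if "(\<chi> i j. e i $ j :: real^'n^'n) *v z = 0" for z
  proof (rule orth0[OF x])
    fix w assume "w \<in> V - {x}"
    then obtain i where "w = e i" using e by (auto simp: bij_betw_def)
    have "\<forall>i. inner z (e i) = 0" using that eq[of z] by (simp add: vec_eq_iff inner_commute)
    then show "inner z w = 0" using \<open>w = e i\<close> by simp
  qed
  then show "invertible (\<chi> i j. e i $ j :: real^'n^'n)"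
    by (simp add: invertible_left_inverse matrix_left_invertible_ker)
qed

lemma uv_ex:
  assumes x: "x \<in> V" shows "\<exists>u. \<forall>w\<in>V-{x}. inner u w = -1"
proof -
  obtain e :: "'n \<Rightarrow> real^'n" where e: "bij_betw e UNIV (V - {x})" using bij_ex[OF x] by blast
  obtain B where B: "(\<chi> i j. e i $ j :: real^'n^'n) ** B = mat 1"
    using row_system(2)[OF x e] unfolding invertible_def by blast
  define u where "u = B *v (\<chi> i. -1)"
  have "(\<chi> i j. e i $ j :: real^'n^'n) *v u = (\<chi> i. -1)"
    unfolding u_def using B by (simp add: matrix_vector_mul_assoc)
  then have ei: "inner (e i) u = -1" for i using row_system(1)[OF x e] by (simp add: vec_eq_iff)
  have "\<forall>w\<in>V-{x}. inner u w = -1"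
  proof
    fix w assume "w \<in> V - {x}"
    then obtain i where "w = e i" using e by (metis bij_betw_def imageE)
    then show "inner u w = -1" using ei[of i] by (metis inner_commute)
  qed
  then show ?thesis by blast
qed

lemma uv_int:
  assumes x: "x \<in> V" and u: "\<forall>w\<in>V-{x}. inner u w = -1"
  shows "\<exists>k::nat. k \<ge> 1 \<and> integral_pt (real k *\<^sub>R u)"
proof -
  obtain e :: "'n \<Rightarrow> real^'n" where e: "bij_betw e UNIV (V - {x})" using bij_ex[OF x] by blast
  let ?A = "(\<chi> i j. e i $ j :: real^'n^'n)"
  have eV: "e i \<in> V" for i using e by (auto simp: bij_betw_def)
  have Aint: "\<And>i j. ?A$i$j \<in> \<int>" using intV eV by simp
  have "e i \<in> V - {x}" for i using e by (auto simp: bij_betw_def)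
  then have "inner (e i) u = -1" for i using u by (metis inner_commute)
  then have Au: "?A *v u = (\<chi> i. -1)"
    using row_system(1)[OF x e] by (simp add: vec_eq_iff)
  have cr: "u$k * det ?A \<in> \<int>" for k
    by (rule cramer_Ints[OF Aint _ Au]) simp
  have d0: "det ?A \<noteq> 0" using row_system(2)[OF x e] by (simp add: invertible_det_nz)
  obtain m where m: "det ?A = of_int m" using det_Ints[OF Aint] by (auto elim!: Ints_cases)
  define k where "k = nat \<bar>m\<bar>"
  have k: "real k = \<bar>det ?A\<bar>" unfolding k_def m by simp
  have "k \<ge> 1" using d0 m unfolding k_def by auto
  moreover have "integral_pt (real k *\<^sub>R u)"
    unfolding integral_pt_def
  proof
    fix i
    have "(real k *\<^sub>R u) $ i = (if det ?A \<ge> 0 then u$i * det ?A else - (u$i * det ?A))"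
      using k by auto
    then show "(real k *\<^sub>R u) $ i \<in> \<int>" using cr[of i] by auto
  qed
  ultimately show ?thesis by blast
qed

definition "uv x = (SOME u. \<forall>w\<in>V-{x}. inner u w = -1)"

lemma uv: "x \<in> V \<Longrightarrow> \<forall>w\<in>V-{x}. inner (uv x) w = -1"
  unfolding uv_def by (rule someI_ex[OF uv_ex])

lemma uv_eq: "x \<in> V \<Longrightarrow> w \<in> V \<Longrightarrow> w \<noteq> x \<Longrightarrow> inner (uv x) w = -1"
  using uv by blast

lemma uv_unique:
  assumes x: "x \<in> V" and u: "\<And>w. w \<in> V - {x} \<Longrightarrow> inner u w = -1"
  shows "u = uv x"
proof -
  have "u - uv x = 0"
    by (rule orth0[OF x]) (use u uv[OF x] in \<open>simp add: inner_diff_left\<close>)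
  then show ?thesis by simp
qed

lemma uv_self:
  assumes x: "x \<in> V" shows "lam x * (inner (uv x) x + 1) = 1"
proof -
  have "0 = inner (uv x) (\<Sum>w\<in>V. lam w *\<^sub>R w)" using lam(3) by simp
  also have "\<dots> = (\<Sum>w\<in>V. lam w * inner (uv x) w)" by (simp add: inner_sum_right)
  also have "\<dots> = lam x * inner (uv x) x + (\<Sum>w\<in>V-{x}. lam w * inner (uv x) w)"
    by (rule sum.remove[OF finV x])
  also have "(\<Sum>w\<in>V-{x}. lam w * inner (uv x) w) = (\<Sum>w\<in>V-{x}. - lam w)"
    using uv[OF x] by (intro sum.cong) auto
  also have "\<dots> = - (1 - lam x)"
    using sum.remove[OF finV x, of lam] lam(2) by (simp add: sum_negf)
  finally show ?thesis by (simp add: algebra_simps)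
qed

lemma uv_gt: "x \<in> V \<Longrightarrow> inner (uv x) x + 1 > 0"
  using uv_self lam(1) by (metis zero_less_mult_pos zero_less_one)

lemma uv_inj: "inj_on uv V"
proof (rule inj_onI, rule ccontr)
  fix x y assume x: "x \<in> V" and y: "y \<in> V" and eq: "uv x = uv y" and ne: "x \<noteq> y"
  have all: "inner (uv x) w = -1" if "w \<in> V" for w
  proof (cases "w = x")
    case True then show ?thesis using eq uv_eq[OF y x] ne by simp
  next
    case False then show ?thesis using uv_eq[OF x that] by simp
  qed
  have "0 = inner (uv x) (\<Sum>w\<in>V. lam w *\<^sub>R w)" using lam(3) by simp
  also have "\<dots> = (\<Sum>w\<in>V. lam w * inner (uv x) w)" by (simp add: inner_sum_right)
  also have "\<dots> = (\<Sum>w\<in>V. - lam w)" using all by (intro sum.cong) auto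
  also have "\<dots> = -1" using lam(2) by (simp add: sum_negf)
  finally show False by simp
qed

definition "Pset = {u. \<forall>v\<in>V. inner u v \<ge> -1}"

lemma dual_eq: "dual_poly (convex hull V) = Pset"
proof
  show "dual_poly (convex hull V) \<subseteq> Pset"
    unfolding dual_poly_def Pset_def using hull_inc[of _ V convex] by auto
next
  show "Pset \<subseteq> dual_poly (convex hull V)"
  proof
    fix u assume u: "u \<in> Pset"
    have "convex hull V \<subseteq> {y. inner u y \<ge> -1}"
      by (rule hull_minimal) (use u in \<open>auto simp: Pset_def convex_halfspace_ge\<close>)
    then show "u \<in> dual_poly (convex hull V)" unfolding dual_poly_def by auto
  qed
qed

lemma convex_Pset: "convex Pset"
  unfolding convex_def Pset_def
proof (clarsimp)
  fix x y :: "real^'n" and a b :: real and v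
  assume h: "\<forall>v\<in>V. - 1 \<le> inner x v" "\<forall>v\<in>V. - 1 \<le> inner y v" "0 \<le> a" "0 \<le> b" "a + b = 1" "v \<in> V"
  have "a * (-1) \<le> a * inner x v" using h by (intro mult_left_mono) auto
  moreover have "b * (-1) \<le> b * inner y v" using h by (intro mult_left_mono) auto
  ultimately show "- 1 \<le> inner (a *\<^sub>R x + b *\<^sub>R y) v" using h(5) by (simp add: inner_add_left)
qed

lemma uv_in_P: assumes x: "x \<in> V" shows "uv x \<in> Pset"
  unfolding Pset_def
proof (intro CollectI ballI)
  fix v assume v: "v \<in> V"
  show "inner (uv x) v \<ge> -1"
  proof (cases "v = x")
    case True then show ?thesis using uv_gt[OF x] by simp
  next
    case False then show ?thesis using uv_eq[OF x v] by simp
  qed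
qed

lemma P_sub: "Pset \<subseteq> convex hull (uv ` V)"
proof
  fix u assume u: "u \<in> Pset"
  define mu where "mu w = lam w * (1 + inner u w)" for w
  have mu0: "mu w \<ge> 0" if "w \<in> V" for w
    using lam(1)[OF that] u that unfolding mu_def Pset_def by auto
  have "sum mu V = sum lam V + inner u (\<Sum>w\<in>V. lam w *\<^sub>R w)"
    unfolding mu_def by (simp add: algebra_simps sum.distrib inner_sum_right)
  then have mu1: "sum mu V = 1" using lam by simp
  define D where "D = u - (\<Sum>w\<in>V. mu w *\<^sub>R uv w)"
  have "V \<noteq> {}" using cardV by (metis card.empty add_is_0 one_neq_zero)
  then obtain x0 where x0: "x0 \<in> V" by blast
  have "inner D x = 0" if x: "x \<in> V" for x
  proof -
    have "(\<Sum>w\<in>V. mu w * inner (uv w) x) = mu x * inner (uv x) x + (\<Sum>w\<in>V-{x}. mu w * inner (uv w) x)"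
      by (rule sum.remove[OF finV x])
    also have "(\<Sum>w\<in>V-{x}. mu w * inner (uv w) x) = (\<Sum>w\<in>V-{x}. - mu w)"
      using uv_eq x by (intro sum.cong) auto
    also have "\<dots> = - (1 - mu x)"
      using sum.remove[OF finV x, of mu] mu1 by (simp add: sum_negf)
    finally have "(\<Sum>w\<in>V. mu w * inner (uv w) x) = (1 + inner u x) * (lam x * (inner (uv x) x + 1)) - 1"
      unfolding mu_def by (simp add: algebra_simps)
    also have "\<dots> = inner u x" using uv_self[OF x] by simp
    finally show ?thesis unfolding D_def by (simp add: inner_diff_left inner_sum_left)
  qed
  then have "D = 0" using orth0[OF x0] by blast
  then have ueq: "u = (\<Sum>w\<in>V. mu w *\<^sub>R uv w)" unfolding D_def by simp
  show "u \<in> convex hull (uv ` V)"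
    unfolding ueq by (rule convex_sum[OF finV convex_convex_hull mu1 mu0]) (auto intro: hull_inc)
qed

lemma vert_P: "vertices Pset = uv ` V"
proof
  show "vertices Pset \<subseteq> uv ` V"
  proof
    fix y assume "y \<in> vertices Pset"
    then have y: "y extreme_point_of Pset" by (simp add: vertices_def)
    have sub: "convex hull (uv ` V) \<subseteq> Pset"
      by (rule hull_minimal) (use uv_in_P convex_Pset in auto)
    have "y extreme_point_of (convex hull (uv ` V))"
      using y P_sub sub unfolding extreme_point_of_def by blast
    then show "y \<in> uv ` V" by (rule extreme_point_of_convex_hull)
  qed
next
  show "uv ` V \<subseteq> vertices Pset"
  proof
    fix y assume "y \<in> uv ` V"
    then obtain x where x: "x \<in> V" and y: "y = uv x" by blast
    have "uv x \<notin> open_segment a b" if a: "a \<in> Pset" and b: "b \<in> Pset" for a b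
    proof
      assume "uv x \<in> open_segment a b"
      then obtain t where ab: "a \<noteq> b" and t: "0 < t" "t < 1" and eq: "uv x = (1 - t) *\<^sub>R a + t *\<^sub>R b"
        by (auto simp: in_segment)
      have both: "inner a w = -1 \<and> inner b w = -1" if w: "w \<in> V - {x}" for w
      proof -
        have "-1 = (1 - t) * inner a w + t * inner b w"
          using uv[OF x] w eq by (simp add: inner_add_left)
        moreover have "inner a w \<ge> -1" "inner b w \<ge> -1" using a b w by (auto simp: Pset_def)
        moreover have "(1 - t) * (inner a w + 1) \<ge> 0" "t * (inner b w + 1) \<ge> 0"
          using t calculation(2,3) by auto
        moreover have "(1 - t) * (inner a w + 1) + t * (inner b w + 1) = (1 - t) * inner a w + t * inner b w + 1"
          by (simp add: algebra_simps)
        ultimately have "(1 - t) * (inner a w + 1) = 0" "t * (inner b w + 1) = 0"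
          by linarith+
        then show ?thesis using t by auto
      qed
      have "a = uv x" by (rule uv_unique[OF x]) (use both in auto)
      moreover have "b = uv x" by (rule uv_unique[OF x]) (use both in auto)
      ultimately show False using ab by simp
    qed
    then show "y \<in> vertices Pset"
      unfolding vertices_def extreme_point_of_def using y uv_in_P[OF x] by auto
  qed
qed

lemma integral_scale: "integral_pt v \<Longrightarrow> integral_pt (real m *\<^sub>R v)"
  unfolding integral_pt_def by simp

lemma gor:
  shows "gorenstein_index (convex hull V) \<ge> 1 \<and>
    (\<forall>x\<in>V. integral_pt (real (gorenstein_index (convex hull V)) *\<^sub>R uv x))"
proof -
  let ?Pg = "\<lambda>g::nat. g \<ge> 1 \<and>
      (\<forall>x \<in> vertices ((\<lambda>u. real g *\<^sub>R u) ` dual_poly (convex hull V)). integral_pt x)"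
  have iff: "?Pg g \<longleftrightarrow> g \<ge> 1 \<and> (\<forall>x\<in>V. integral_pt (real g *\<^sub>R uv x))" for g
  proof (cases "g \<ge> 1")
    case True
    then have "vertices ((\<lambda>u. real g *\<^sub>R u) ` dual_poly (convex hull V)) = (\<lambda>u. real g *\<^sub>R u) ` uv ` V"
      by (simp add: vertices_scale dual_eq vert_P)
    then show ?thesis using True by auto
  qed simp
  define K where "K x = (SOME k::nat. k \<ge> 1 \<and> integral_pt (real k *\<^sub>R uv x))" for x
  have K: "K x \<ge> 1 \<and> integral_pt (real (K x) *\<^sub>R uv x)" if "x \<in> V" for x
    unfolding K_def by (rule someI_ex[OF uv_int[OF that uv[OF that]]])
  define g0 where "g0 = (\<Prod>x\<in>V. K x)"
  have "g0 \<ge> 1" unfolding g0_def using K by (intro prod_ge_1) auto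
  moreover have "integral_pt (real g0 *\<^sub>R uv x)" if x: "x \<in> V" for x
  proof -
    have "g0 = K x * (\<Prod>y\<in>V-{x}. K y)" unfolding g0_def by (rule prod.remove[OF finV x])
    then have eq: "real g0 *\<^sub>R uv x = real (\<Prod>y\<in>V-{x}. K y) *\<^sub>R (real (K x) *\<^sub>R uv x)"
      by (simp add: mult.commute)
    show ?thesis unfolding eq by (rule integral_scale) (use K[OF x] in blast)
  qed
  ultimately have "?Pg g0" using iff by blast
  then have "?Pg (gorenstein_index (convex hull V))"
    unfolding gorenstein_index_def by (rule LeastI)
  then show ?thesis using iff by blast
qed

lemma weight_props:
  assumes x: "x \<in> V" and g: "g \<ge> 1" "\<forall>y\<in>V. integral_pt (real g *\<^sub>R uv y)"
  shows "weight (uv ` V) (uv x) > 0"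
    and "real g ^ (CARD('n) - 1) * weight (uv ` V) (uv x) \<in> \<int>"
proof -
  let ?U = "uv ` V"
  have "card (?U - {uv x}) = CARD('n)"
    using x finV cardV card_image[OF uv_inj] by simp
  then have ex: "\<exists>f::'n \<Rightarrow> real^'n. bij_betw f UNIV (?U - {uv x})"
    using finite_same_card_bij[of "UNIV::'n set" "?U - {uv x}"] finV by simp
  define f where "f = (SOME f :: 'n \<Rightarrow> real^'n. bij_betw f UNIV (?U - {uv x}))"
  have f: "bij_betw f UNIV (?U - {uv x})"
    unfolding f_def by (rule someI_ex[of "\<lambda>f. bij_betw f UNIV (?U - {uv x})", OF ex])
  define A where "A = (\<chi> i j. f j $ i :: real^'n^'n)"
  have wA: "weight ?U (uv x) = \<bar>det A\<bar>"
    unfolding weight_def Let_def A_def f_def by simp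
  have fy: "\<exists>y\<in>V. y \<noteq> x \<and> f j = uv y" for j
  proof -
    have "f j \<in> ?U - {uv x}" using f by (metis bij_betwE UNIV_I)
    then show ?thesis by auto
  qed
  have fx: "inner (f j) x = -1" for j
    using fy[of j] uv_eq x by (metis)
  have Av: "A *v c = (\<Sum>j\<in>UNIV. c$j *\<^sub>R f j)" for c
    unfolding A_def by (simp add: vec_eq_iff matrix_vector_mult_def sum_component mult.commute)
  have Ainner: "inner (A *v c) w = (\<Sum>j\<in>UNIV. c$j * inner (f j) w)" for c w
    unfolding Av by (simp add: inner_sum_left)
  have "c = 0" if Ac: "A *v c = 0" for c
  proof -
    have "(\<Sum>j\<in>UNIV. c$j * inner (f j) x) = 0" using Ainner[of c x] Ac by simp
    then have s0: "(\<Sum>j\<in>UNIV. c$j) = 0" using fx by (simp add: sum_negf)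
    have "c$j0 = 0" for j0
    proof -
      obtain y where y: "y \<in> V" "y \<noteq> x" "f j0 = uv y" using fy by blast
      have fjy: "inner (f j) y = -1 + (if j = j0 then inner (uv y) y + 1 else 0)" for j
      proof (cases "j = j0")
        case True then show ?thesis using y by simp
      next
        case False
        obtain y' where y': "y' \<in> V" "f j = uv y'" using fy by blast
        have "f j \<noteq> f j0" using f False by (auto simp: bij_betw_def inj_def)
        then have "y' \<noteq> y" using y y' by auto
        then show ?thesis using uv_eq[OF y'(1) y(1)] y' False by simp
      qed
      have "0 = (\<Sum>j\<in>UNIV. c$j * inner (f j) y)" using Ainner[of c y] Ac by simp
      also have "\<dots> = (\<Sum>j\<in>UNIV. - c$j + (if j = j0 then c$j * (inner (uv y) y + 1) else 0))"
        by (intro sum.cong) (auto simp: fjy algebra_simps)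
      also have "\<dots> = c$j0 * (inner (uv y) y + 1)"
        using s0 by (simp only: sum.distrib sum_negf) simp
      finally show ?thesis using uv_gt[OF y(1)] by simp
    qed
    then show ?thesis by (simp add: vec_eq_iff)
  qed
  then have dA: "det A \<noteq> 0"
    by (simp add: invertible_det_nz[symmetric] invertible_left_inverse matrix_left_invertible_ker)
  then show "weight ?U (uv x) > 0" using wA by simp
  define d where "d = CARD('n)"
  have d1: "d \<ge> 1" unfolding d_def by simp
  define M where "M = (\<chi> i j. real g * A$i$j :: real^'n^'n)"
  have dM: "det M = real g ^ d * det A" unfolding M_def d_def by (rule det_scale)
  have Mint: "transpose M $ i $ j \<in> \<int>" for i j
  proof -
    obtain y where y: "y \<in> V" "f i = uv y" using fy by blast
    have "transpose M $ i $ j = (real g *\<^sub>R uv y) $ j"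
      unfolding M_def A_def transpose_def using y by simp
    then show ?thesis using g(2) y by (simp add: integral_pt_def)
  qed
  define z where "z = (1 / real g) *\<^sub>R x"
  have Mz: "transpose M *v z = (\<chi> j. -1)"
  proof -
    have "(transpose M *v z) $ j = inner (f j) x" for j
      unfolding M_def A_def z_def transpose_def using g(1)
      by (simp add: matrix_vector_mult_def inner_vec_def)
    then show ?thesis using fx by (simp add: vec_eq_iff)
  qed
  have "z$k * det (transpose M) \<in> \<int>" for k
    by (rule cramer_Ints[OF Mint _ Mz]) simp
  then have "(real g ^ (d - 1) * det A) * x$k \<in> \<int>" for k
  proof -
    have "real g ^ d = real g * real g ^ (d - 1)" using d1 by (metis power_eq_if not_one_le_zero)
    then have "z$k * det (transpose M) = (real g ^ (d - 1) * det A) * x$k"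
      unfolding det_transpose dM z_def using g(1) by simp
    then show ?thesis using \<open>z$k * det (transpose M) \<in> \<int>\<close> by simp
  qed
  then have "real g ^ (d - 1) * det A \<in> \<int>" by (rule primitive_mult_Ints[OF primV[OF x]])
  then have "\<bar>real g ^ (d - 1) * det A\<bar> \<in> \<int>" by (rule Ints_abs)
  then show "real g ^ (CARD('n) - 1) * weight ?U (uv x) \<in> \<int>"
    unfolding wA d_def by (simp add: abs_mult)
qed

end

theorem lemma4p1:
  fixes V :: "(real^'n) set"
  assumes "fano_simplex V"
  shows "real (gorenstein_index (convex hull V)) ^ (CARD('n) - 1)
           * weight_factor (vertices (dual_poly (convex hull V))) \<in> \<int>"
proof -
  interpret fs V by (rule fs.intro[OF assms])
  define g where "g = gorenstein_index (convex hull V)"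
  have g: "g \<ge> 1" "\<forall>x\<in>V. integral_pt (real g *\<^sub>R uv x)" using gor unfolding g_def by auto
  have vv: "vertices (dual_poly (convex hull V)) = uv ` V" by (simp add: dual_eq vert_P)
  have ne: "uv ` V \<noteq> {}" using cardV by (metis card.empty add_is_0 one_neq_zero image_is_empty)
  show ?thesis
    unfolding g_def[symmetric] vv weight_factor_def
  proof (rule wf_Ints)
    show "finite (uv ` V)" using finV by simp
    show "uv ` V \<noteq> {}" by (rule ne)
    show "weight (uv ` V) w > 0" if "w \<in> uv ` V" for w
      using that weight_props(1)[OF _ g] by blast
    show "real g ^ (CARD('n) - 1) * weight (uv ` V) w \<in> \<int>" if "w \<in> uv ` V" for w
      using that weight_props(2)[OF _ g] by blast
    show "real g ^ (CARD('n) - 1) \<in> \<int>" by simp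
    show "real g ^ (CARD('n) - 1) > 0" using g by simp
  qed
qed

end
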